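(* Let $P\subseteq\mathbb{C}$ be a finitely generated field extension of $\mathbb{Q}$, $q$ a prime, and $\epsilon$ a root of unity of order $q$. If $a\in P$ is $q$-simple in $P$, then $a$ is $q$-simple in $P(\epsilon)$.
   Context: $\mu$ is the group of all roots of unity in $\mathbb{C}^\times$. For a field $K\subseteq\mathbb{C}$ and integer $k>1$, a nonzero $a\in K$ is $k$-simple in $K$ if $a\notin\mu$ and for all $b\in K$, $\epsilon\in\mu$ and integers $d$, $a^d=b^k\epsilon$ implies $k\mid d$. *)

theory Defs
  imports Complex_Main "HOL-Computational_Algebra.Primes"
begin

definition is_subfield :: "complex set \<Rightarrow> bool" where
  "is_subfield K \<longleftrightarrow> 0 \<in> K \<and> 1 \<in> K \<and>
     (\<forall>x\<in>K. \<forall>y\<in>K. x + y \<in> K \<and> x * y \<in> K) \<and>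
     (\<forall>x\<in>K. - x \<in> K) \<and> (\<forall>x\<in>K. x \<noteq> 0 \<longrightarrow> inverse x \<in> K)"

definition gen_field :: "complex set \<Rightarrow> complex set" where
  "gen_field S = \<Inter> {K. is_subfield K \<and> S \<subseteq> K}"

definition fin_gen_field :: "complex set \<Rightarrow> bool" where
  "fin_gen_field P \<longleftrightarrow> (\<exists>S. finite S \<and> P = gen_field S)"

definition adjoin :: "complex set \<Rightarrow> complex \<Rightarrow> complex set" where
  "adjoin P e = gen_field (insert e P)"

definition roots_of_unity :: "complex set" where
  "roots_of_unity = {z. \<exists>n::nat. n > 0 \<and> z ^ n = 1}"

definition root_of_unity_order :: "complex \<Rightarrow> nat \<Rightarrow> bool" where
  "root_of_unity_order e n \<longleftrightarrow> n > 0 \<and> e ^ n = 1 \<and> (\<forall>m. 0 < m \<and> m < n \<longrightarrow> e ^ m \<noteq> 1)"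

definition k_simple :: "nat \<Rightarrow> complex set \<Rightarrow> complex \<Rightarrow> bool" where
  "k_simple k K a \<longleftrightarrow> a \<in> K \<and> a \<noteq> 0 \<and> a \<notin> roots_of_unity \<and>
     (\<forall>b\<in>K. \<forall>e\<in>roots_of_unity. \<forall>d::int. a powi d = b ^ k * e \<longrightarrow> int k dvd d)"

end

theory Submission
  imports Defs "HOL-Algebra.Finite_Extensions" "HOL-Computational_Algebra.Fundamental_Theorem_Algebra"
begin

definition CR :: "complex ring" where
  "CR = \<lparr>carrier = UNIV, monoid.mult = (*), one = 1, zero = 0, add = (+)\<rparr>"

lemma CR_simps [simp]: "carrier CR = UNIV" "monoid.mult CR = (*)" "one CR = 1"
  "zero CR = 0" "add CR = (+)"
  by (simp_all add: CR_def)

lemma field_CR: "field CR"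
proof -
  have "\<exists>y. x + y = 0" for x :: complex
    using add.right_inverse by blast
  moreover have "x \<noteq> 0 \<Longrightarrow> \<exists>y. x * y = 1" for x :: complex
    by (rule exI[of _ "inverse x"]) auto
  ultimately show "field CR"
    unfolding CR_def using add.right_inverse
    by unfold_locales (auto simp:algebra_simps Units_def)
qed

lemma domain_CR: "domain CR" using field_CR field.axioms(1) by blast
lemma cring_CR: "cring CR" using domain_CR domain.axioms(1) by blast
lemma ring_CR: "ring CR" using cring_CR cring.axioms(1) by blast

lemma CR_a_inv [simp]: "a_inv CR x = - x"
proof -
  interpret C: field CR by (rule field_CR)
  show ?thesis by (rule C.add.inv_equality) auto
qed

lemma CR_minus [simp]: "a_minus CR x y = x - y"
  by (simp add: a_minus_def)

lemma CR_pow [simp]: "pow CR x n = x ^ n"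
proof -
  interpret C: field CR by (rule field_CR)
  show ?thesis by (induct n) (auto simp: C.nat_pow_Suc mult.commute)
qed

lemma CR_inv [simp]: "x \<noteq> 0 \<Longrightarrow> m_inv CR x = inverse x"
proof -
  interpret C: field CR by (rule field_CR)
  assume "x \<noteq> 0" then show ?thesis by (intro C.inv_char) auto
qed

lemma subfield_CR: "is_subfield K \<Longrightarrow> subfield K CR"
  unfolding is_subfield_def
  apply (rule field.subfieldI'[OF field_CR])
   apply (rule ring.subringI[OF ring_CR]) apply auto
  done

lemma CR_subfield: "subfield K CR \<Longrightarrow> is_subfield K"
proof -
  assume K: "subfield K CR"
  note E = subringE[OF subfieldE(1)[OF K]]
  have "inverse k \<in> K" if "k \<in> K" "k \<noteq> 0" for k
    using ring.subfield_m_inv(1)[OF ring_CR K, of k] that by auto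
  then show ?thesis using E unfolding is_subfield_def by auto
qed


lemma CR_eval_Cons: "ring.eval CR (a # l) x = a * x ^ length l + ring.eval CR l x"
  using ring.eval.simps(2)[OF ring_CR, of a l] by simp

lemma CR_eval_Nil: "ring.eval CR [] x = 0"
  using ring.eval.simps(1)[OF ring_CR] by simp

lemma poly_Poly_rev: "poly (Poly (rev l)) x = ring.eval CR l x"
  by (induct l) (auto simp: Poly_snoc CR_eval_Cons CR_eval_Nil poly_monom)

lemma CR_eval_rep1: "ring.eval CR (replicate n 1) x = (\<Sum>i<n. x ^ i)"
  by (induct n) (auto simp: CR_eval_Cons CR_eval_Nil)

lemma CR_eval_rep0: "ring.eval CR (replicate n 0 @ l) x = ring.eval CR l x"
  by (induct n) (auto simp: CR_eval_Cons)

lemma CR_eval_XN: "N > 0 \<Longrightarrow> ring.eval CR (1 # replicate (N - 1) 0 @ [- A]) x = x ^ N - A"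
  by (simp add: CR_eval_Cons CR_eval_rep0 CR_eval_Nil)

lemma CR_pdivides_eval:
  assumes "p pdivides\<^bsub>CR\<^esub> g" "ring.eval CR p z = 0"
  shows "ring.eval CR g z = 0"
proof -
  interpret C: domain CR by (rule domain_CR)
  from assms(1) obtain h where h: "h \<in> carrier (poly_ring CR)" "g = ring.poly_mult CR p h"
    unfolding pdivides_def factor_def by (auto simp: univ_poly_def)
  have "ring.eval CR g z = ring.eval CR p z * ring.eval CR h z"
    unfolding h(2) by (subst C.eval_poly_mult) auto
  with assms(2) show ?thesis by simp
qed


lemma alg_e:
  assumes P: "is_subfield P" and q: "q \<ge> 2" "e ^ q = 1" "e \<noteq> 1"
  shows "\<not> ring.transcendental CR P e"
    and "length (ring.Irr CR P e) - 1 \<le> q - 1"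
proof -
  interpret C: domain CR by (rule domain_CR)
  have sP: "subfield P CR" by (rule subfield_CR[OF P])
  have P1: "1 \<in> P" using P unfolding is_subfield_def by auto
  let ?phi = "replicate q (1::complex)"
  have phiC: "?phi \<in> carrier (P[X]\<^bsub>CR\<^esub>)"
    unfolding sym[OF univ_poly_carrier] polynomial_def using P1 q(1)
    by (cases q) auto
  have "(e - 1) * (\<Sum>i<q. e ^ i) = 0" using q(2) power_diff_1_eq[of e q] by simp
  hence ev: "ring.eval CR ?phi e = 0" using q(3) by (simp add: CR_eval_rep1)
  have ne: "?phi \<noteq> []" using q(1) by auto
  have alg: "(C.algebraic over P) e"
    by (rule C.algebraicI[OF phiC ne]) (simp add: ev)
  then show "\<not> ring.transcendental CR P e" by (simp add: over_def)
  have "ring.Irr CR P e pdivides\<^bsub>CR\<^esub> ?phi"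
    using C.Irr_minimal[OF sP _ alg phiC] ev by simp
  moreover have "ring.Irr CR P e \<in> carrier (P[X]\<^bsub>CR\<^esub>)"
    using C.IrrE(1)[OF sP _ alg] by simp
  ultimately have "length (ring.Irr CR P e) - 1 \<le> length ?phi - 1"
    using C.pdivides_imp_degree_le[OF subfieldE(1)[OF sP] _ phiC ne] by blast
  then show "length (ring.Irr CR P e) - 1 \<le> q - 1" by simp
qed


lemma deg_c:
  assumes P: "is_subfield P" and q: "q \<ge> 2" "e ^ q = 1" "e \<noteq> 1"
    and c: "c \<in> ring.simple_extension CR P e"
  shows "\<not> ring.transcendental CR P c"
    and "length (ring.Irr CR P c) - 1 \<le> q - 1"
proof -
  interpret C: domain CR by (rule domain_CR)
  have sP: "subfield P CR" by (rule subfield_CR[OF P])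
  have alge: "(C.algebraic over P) e" using alg_e(1)[OF P q] by (simp add: over_def)
  define n where "n = length (ring.Irr CR P e) - 1"
  have nq: "n \<le> q - 1" using alg_e(2)[OF P q] n_def by simp
  let ?F = "ring.simple_extension CR P e"
  have dimF: "C.dimension n P ?F"
    using C.dimension_simple_extension[OF sP _ alge] n_def by simp
  have subF: "subring ?F CR"
    using C.simple_extension_is_subring[OF subfieldE(1)[OF sP]] by simp
  let ?Us = "\<lambda>n. map (\<lambda>i. c [^]\<^bsub>CR\<^esub> i) (rev [0..< Suc n])"
  have set_Us: "set (?Us n) \<subseteq> ?F"
    using c subringE(3,6)[OF subF] by (induct n) (auto)
  hence "set (?Us n) \<subseteq> carrier CR" by simp
  moreover have "C.dependent P (?Us n)"
    using C.independent_length_le_dimension[OF sP dimF _ set_Us] by auto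
  ultimately
  obtain Ks where Ks: "length Ks = Suc n" "C.combine Ks (?Us n) = \<zero>\<^bsub>CR\<^esub>" "set Ks \<subseteq> P" "set Ks \<noteq> { \<zero>\<^bsub>CR\<^esub> }"
    using C.dependent_imp_non_trivial_combine[OF sP, of "?Us n"] by auto
  have "C.eval (C.normalize Ks) c = \<zero>\<^bsub>CR\<^esub>"
    using C.combine_eq_eval[of Ks] C.eval_normalize[of Ks c] Ks(1-2) by (simp add: C.exp_base_def)
  moreover have "C.normalize Ks = [] \<Longrightarrow> set Ks \<subseteq> { \<zero>\<^bsub>CR\<^esub> }"
    by (induct Ks rule: C.normalize.induct) (auto split: if_splits)
  hence nz: "C.normalize Ks \<noteq> []"
    using Ks(1,4) by (metis list.size(3) nat.distinct(1) set_empty subset_singleton_iff)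
  moreover have inC: "C.normalize Ks \<in> carrier (P[X]\<^bsub>CR\<^esub>)"
    using C.normalize_gives_polynomial[OF Ks(3)] unfolding univ_poly_def by auto
  ultimately have algc: "(C.algebraic over P) c"
    using C.algebraicI by auto
  then show "\<not> ring.transcendental CR P c" by (simp add: over_def)
  have "ring.Irr CR P c pdivides\<^bsub>CR\<^esub> C.normalize Ks"
    using C.Irr_minimal[OF sP _ algc inC] \<open>C.eval (C.normalize Ks) c = \<zero>\<^bsub>CR\<^esub>\<close> by simp
  moreover have "ring.Irr CR P c \<in> carrier (P[X]\<^bsub>CR\<^esub>)"
    using C.IrrE(1)[OF sP _ algc] by simp
  ultimately have "length (ring.Irr CR P c) - 1 \<le> length (C.normalize Ks) - 1"
    using C.pdivides_imp_degree_le[OF subfieldE(1)[OF sP] _ inC nz] by blast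
  also have "\<dots> \<le> n" using C.normalize_length_le[of Ks] Ks(1) by simp
  finally show "length (ring.Irr CR P c) - 1 \<le> q - 1" using nq by simp
qed

lemma prod_roots:
  fixes c :: complex
  assumes "\<forall>x\<in>#M. x ^ N = c ^ N" "c \<noteq> 0"
  shows "\<exists>\<zeta>. \<zeta> ^ (2 * N) = 1 \<and> (\<Prod>x\<in>#M. (- x)) = c ^ (size M) * \<zeta>"
  using assms(1)
proof (induct M)
  case empty then show ?case by (intro exI[of _ 1]) simp
next
  case (add x M)
  have "\<forall>x\<in>#M. x ^ N = c ^ N" using add.prems by simp
  then obtain \<zeta> where z: "\<zeta> ^ (2 * N) = 1" "(\<Prod>x\<in>#M. (- x)) = c ^ (size M) * \<zeta>" using add.hyps by blast
  define w where "w = - x / c"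
  have xw: "- x = c * w" using assms(2) by (simp add: w_def)
  have "w ^ N = (-1) ^ N * (x ^ N / c ^ N)" unfolding w_def
    by (subst power_divide, subst power_minus) simp
  also have "\<dots> = (-1) ^ N" using add.prems assms(2) by simp
  finally have wN: "w ^ N = (-1) ^ N" .
  have "w ^ (2 * N) = (w ^ N) ^ 2" by (simp only: power_mult mult.commute[of 2 N])
  also have "\<dots> = ((-1) ^ 2) ^ N" unfolding wN by (simp only: power_mult[symmetric] mult.commute[of 2 N])
  finally have "w ^ (2 * N) = 1" by simp
  then have "(w * \<zeta>) ^ (2 * N) = 1" using z(1) by (simp only: power_mult_distrib mult_1)
  moreover have "(\<Prod>x\<in>#add_mset x M. (- x)) = c ^ size (add_mset x M) * (w * \<zeta>)"
    using z(2) xw by (simp add: mult_ac)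
  ultimately show ?case by blast
qed

lemma poly_prod_lin_0: "poly (\<Prod>x\<in>#M. [:- x, 1:]) 0 = (\<Prod>x\<in>#M. (- (x::complex)))"
  by (induct M) auto

lemma key:
  assumes P: "is_subfield P" and q: "q \<ge> 2" "e ^ q = 1" "e \<noteq> 1"
    and c: "c \<in> ring.simple_extension CR P e" "c \<noteq> 0"
    and N: "N > 0" and A: "A \<in> P" "c ^ N = A"
  shows "\<exists>u\<in>P. \<exists>\<zeta>. \<zeta> ^ (2 * N) = 1 \<and> (\<exists>r. 0 < r \<and> r < q \<and> u = c ^ r * \<zeta>)"
proof -
  interpret C: domain CR by (rule domain_CR)
  have sP: "subfield P CR" by (rule subfield_CR[OF P])
  have algc: "(C.algebraic over P) c" using deg_c(1)[OF P q c(1)] by (simp add: over_def)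
  define l where "l = ring.Irr CR P c"
  have rq: "length l - 1 \<le> q - 1" using deg_c(2)[OF P q c(1)] l_def by simp
  have lC: "l \<in> carrier (P[X]\<^bsub>CR\<^esub>)" and lirr: "pirreducible\<^bsub>CR\<^esub> P l"
    and lhd: "hd l = 1" and lev: "C.eval l c = 0"
    using C.IrrE[OF sP _ algc] l_def by auto
  have lP: "set l \<subseteq> P" using lC unfolding sym[OF univ_poly_carrier] polynomial_def by auto
  have lne: "l \<noteq> []" using lirr unfolding ring_irreducible_def by (simp add: univ_poly_zero)
  have l2: "length l \<ge> 2"
  proof (rule ccontr)
    assume "\<not> length l \<ge> 2"
    with lne obtain x where "l = [x]" by (cases l; cases "tl l") auto
    with lhd lev show False by (simp add: CR_eval_Cons CR_eval_Nil)
  qed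
  define r where "r = length l - 1"
  have r: "0 < r" "r < q" using l2 rq q(1) r_def by auto
  have P0: "0 \<in> P" and P1: "1 \<in> P" and Pm: "- A \<in> P" using P A(1) unfolding is_subfield_def by auto
  define g where "g = 1 # replicate (N - 1) 0 @ [- A]"
  have gC: "g \<in> carrier (P[X]\<^bsub>CR\<^esub>)"
    unfolding sym[OF univ_poly_carrier] polynomial_def g_def using P0 P1 Pm by auto
  have gev: "\<And>z. C.eval g z = z ^ N - A" unfolding g_def using CR_eval_XN[OF N] by simp
  have "l pdivides\<^bsub>CR\<^esub> g"
    using C.Irr_minimal[OF sP _ algc gC] gev A(2) l_def by simp
  hence roots: "\<And>z. C.eval l z = 0 \<Longrightarrow> z ^ N = c ^ N"
    using CR_pdivides_eval gev A(2) by fastforce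
  define F where "F = Poly (rev l)"
  have Fev: "\<And>z. poly F z = C.eval l z" unfolding F_def by (rule poly_Poly_rev)
  have cF: "\<And>i. Polynomial.coeff F i = nth_default 0 (rev l) i" unfolding F_def by simp
  have Fr: "Polynomial.coeff F r = 1"
    unfolding cF using lne lhd r_def
    by (simp add: nth_default_def rev_nth hd_conv_nth)
  have "Polynomial.degree F \<le> r"
    by (rule degree_le) (auto simp: cF nth_default_def r_def)
  moreover have "r \<le> Polynomial.degree F" by (rule le_degree) (simp add: Fr)
  ultimately have dF: "Polynomial.degree F = r" by simp
  hence lcF: "Polynomial.lead_coeff F = 1" using Fr by simp
  have F0: "poly F 0 \<in> P"
  proof -
    have "poly F 0 = Polynomial.coeff F 0" by (simp add: poly_0_coeff_0)
    also have "\<dots> = last l" unfolding cF using lne by (simp add: nth_default_def hd_rev[symmetric] hd_conv_nth)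
    finally show ?thesis using lP lne by auto
  qed
  have Fdec: "F = (\<Prod>x\<in>#proots F. [:- x, 1:])"
    using complex_poly_decompose_multiset[of F] lcF by simp
  have "\<forall>x\<in>#proots F. x ^ N = c ^ N"
  proof
    fix x assume "x \<in># proots F"
    then have "poly F x = 0" using lcF by (metis set_count_proots mem_Collect_eq zero_neq_one leading_coeff_0_iff set_mset_def)
    then show "x ^ N = c ^ N" using roots Fev by simp
  qed
  then obtain \<zeta> where z: "\<zeta> ^ (2 * N) = 1" "(\<Prod>x\<in>#proots F. (- x)) = c ^ size (proots F) * \<zeta>"
    using prod_roots[OF _ c(2)] by blast
  have "poly F 0 = c ^ r * \<zeta>"
    using z(2) poly_prod_lin_0[of "proots F"] Fdec size_proots_complex[of F] dF by metis
  then show ?thesis using F0 r z(1) by blast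
qed

lemma gen_field_least: "is_subfield K \<Longrightarrow> S \<subseteq> K \<Longrightarrow> gen_field S \<subseteq> K"
  unfolding gen_field_def by blast

lemma gen_field_incl: "S \<subseteq> gen_field S"
  unfolding gen_field_def by blast

lemma gen_field_subfield: "is_subfield (gen_field S)"
  unfolding gen_field_def is_subfield_def by blast

lemma subfield_power: "is_subfield K \<Longrightarrow> x \<in> K \<Longrightarrow> x ^ n \<in> K"
  by (induct n) (auto simp: is_subfield_def)

lemma subfield_power_int: "is_subfield K \<Longrightarrow> x \<in> K \<Longrightarrow> x powi n \<in> K"
proof -
  assume K: "is_subfield K" and x: "x \<in> K"
  have "inverse x \<in> K"
    using K x by (cases "x = 0") (auto simp: is_subfield_def)
  then show ?thesis using K x subfield_power[OF K]
    by (auto simp: power_int_def)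
qed

lemma gen_field_sub_simple:
  assumes P: "is_subfield P" and q: "q \<ge> 2" "e ^ q = 1" "e \<noteq> 1"
  shows "gen_field (insert e P) \<subseteq> ring.simple_extension CR P e"
proof -
  interpret C: domain CR by (rule domain_CR)
  have sP: "subfield P CR" by (rule subfield_CR[OF P])
  have alge: "(C.algebraic over P) e" using alg_e(1)[OF P q] by (simp add: over_def)
  have "subfield (ring.simple_extension CR P e) CR"
    using C.simple_extension_is_subfield[OF sP _] alge by simp
  hence "is_subfield (ring.simple_extension CR P e)" by (rule CR_subfield)
  moreover have "insert e P \<subseteq> ring.simple_extension CR P e"
    using C.simple_extension_incl[of P e] C.simple_extension_mem[OF subfieldE(1)[OF sP], of e] by auto
  ultimately show ?thesis by (rule gen_field_least)
qed

hide_const (open) Divisibility.prime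

theorem lemma2p9:
  fixes P :: "complex set" and q :: nat and e a :: complex
  assumes "is_subfield P" and "fin_gen_field P"
    and "prime q"
    and "root_of_unity_order e q"
    and "k_simple q P a"
  shows "k_simple q (adjoin P e) a"
proof -
  note P = assms(1)
  have q2: "q \<ge> 2" using assms(3) prime_ge_2_nat by blast
  have eq: "e ^ q = 1" using assms(4) unfolding root_of_unity_order_def by auto
  have e1: "e \<noteq> 1" using assms(4) q2 unfolding root_of_unity_order_def
    by (metis One_nat_def less_le_trans lessI numeral_2_eq_2 power_one_right zero_less_one)
  note qs = q2 eq e1
  define L where "L = adjoin P e"
  have Lf: "is_subfield L" unfolding L_def adjoin_def by (rule gen_field_subfield)
  have PL: "P \<subseteq> L" unfolding L_def adjoin_def using gen_field_incl by blast
  have Lsimp: "L \<subseteq> ring.simple_extension CR P e"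
    unfolding L_def adjoin_def by (rule gen_field_sub_simple[OF P qs])
  have aP: "a \<in> P" and a0: "a \<noteq> 0" and amu: "a \<notin> roots_of_unity"
    and H: "\<And>b \<epsilon> d. b \<in> P \<Longrightarrow> \<epsilon> \<in> roots_of_unity \<Longrightarrow> a powi d = b ^ q * \<epsilon> \<Longrightarrow> int q dvd d"
    using assms(5) unfolding k_simple_def by auto
  have main: "int q dvd d" if b: "b \<in> L" and eps: "\<epsilon> \<in> roots_of_unity" and ad: "a powi d = b ^ q * \<epsilon>" for b \<epsilon> d
  proof (rule ccontr)
    assume nd: "\<not> int q dvd d"
    have "coprime (int q) d" using assms(3) nd by (intro prime_imp_coprime) auto
    then have "gcd d (int q) = 1" by (metis coprime_commute coprime_iff_gcd_eq_1)
    then obtain s t where st: "s * d + t * int q = 1" using bezout_int[of d "int q"] by auto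
    have "a powi d \<noteq> 0" using a0 by simp
    then have b0: "b \<noteq> 0" and e0: "\<epsilon> \<noteq> 0" using ad q2 by auto
    define c where "c = b powi s * a powi t"
    define \<epsilon>' where "\<epsilon>' = \<epsilon> powi s"
    have cL: "c \<in> L" unfolding c_def using Lf b PL aP subfield_power_int[OF Lf]
      by (auto simp: is_subfield_def)
    have "a = a powi (s * d + t * int q)" using st by simp
    also have "\<dots> = a powi (s * d) * a powi (t * int q)" using a0 by (simp add: power_int_add)
    also have "a powi (s * d) = (a powi d) powi s" by (simp add: power_int_mult mult.commute)
    also have "\<dots> = (b ^ q) powi s * \<epsilon>'" unfolding ad \<epsilon>'_def by (simp add: power_int_mult_distrib)
    also have "(b ^ q) powi s = (b powi s) ^ q"
      by (simp add: power_int_power power_int_power' mult.commute)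
    also have "a powi (t * int q) = (a powi t) ^ q"
      by (simp add: power_int_power')
    finally have ac: "a = c ^ q * \<epsilon>'" unfolding c_def by (simp add: power_mult_distrib mult_ac)
    from eps obtain m where m: "m > 0" "\<epsilon> ^ m = 1" unfolding roots_of_unity_def by auto
    have em: "\<epsilon>' ^ m = 1"
    proof -
      have "\<epsilon>' ^ m = \<epsilon> powi (s * int m)" unfolding \<epsilon>'_def by (simp add: power_int_power')
      also have "\<dots> = (\<epsilon> ^ m) powi s" by (simp add: power_int_power mult.commute)
      finally show ?thesis using m(2) by simp
    qed
    define N where "N = q * m"
    have N0: "N > 0" using q2 m(1) N_def by simp
    have AP: "a ^ m \<in> P" using subfield_power[OF P aP] .
    have cN: "c ^ N = a ^ m"
      using ac em unfolding N_def by (simp add: power_mult power_mult_distrib)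
    have c0: "c \<noteq> 0" using ac a0 q2 by auto
    obtain u \<zeta> r where u: "u \<in> P" "\<zeta> ^ (2 * N) = 1" "0 < r" "r < q" "u = c ^ r * \<zeta>"
      using key[OF P qs _ c0 N0 AP cN] cL Lsimp by blast
    have z0: "\<zeta> \<noteq> 0" proof assume "\<zeta> = 0" then show False using u(2) N0 by (simp add: power_0_left) qed
    define \<delta> where "\<delta> = inverse (\<zeta> ^ q) * \<epsilon>' ^ r"
    have "a ^ r = (c ^ q * \<epsilon>') ^ r" using ac by simp
    also have "\<dots> = (c ^ r) ^ q * \<epsilon>' ^ r" by (simp add: power_mult_distrib flip: power_mult) (simp add: mult.commute)
    also have "(c ^ r) = u * inverse \<zeta>" using u(5) z0 by simp
    finally have ar: "a ^ r = u ^ q * \<delta>" unfolding \<delta>_def using z0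
      by (simp add: power_mult_distrib power_inverse)
    have "\<delta> ^ (2 * N) = 1"
    proof -
      have "\<delta> ^ (2 * N) = inverse ((\<zeta> ^ (2 * N)) ^ q) * ((\<epsilon>' ^ m) ^ (2 * q * r))"
        unfolding \<delta>_def N_def by (simp add: power_mult_distrib power_inverse flip: power_mult) (simp add: mult_ac)
      then show ?thesis using u(2) em by simp
    qed
    then have "\<delta> \<in> roots_of_unity" unfolding roots_of_unity_def using N0 by (intro CollectI exI[of _ "2 * N"]) simp
    then have "int q dvd int r" using H[OF u(1)] ar by (metis power_int_of_nat)
    then have "q dvd r" by simp
    then show False using u(3,4) by (simp add: nat_dvd_not_less)
  qed
  show ?thesis
    unfolding k_simple_def L_def[symmetric] using aP PL a0 amu main by blast
qed

end
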